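(* Consider the system \[ \begin{aligned} \frac{dS}{dt}&= B-\beta S(t)\int_{t_0}^{h_1} f_{T_1}(s)e^{-\mu_v s}G(I(t-s))\,ds-\mu S(t)+\alpha\int_{t_0}^{\infty} f_{T_3}(r)I(t-r)e^{-\mu r}\,dr,\\ \frac{dE}{dt}&= \beta S(t)\int_{t_0}^{h_1} f_{T_1}(s)e^{-\mu_v s}G(I(t-s))\,ds-\mu E(t)-\beta\int_{t_0}^{h_2} f_{T_2}(u)S(t-u)\int_{t_0}^{h_1} f_{T_1}(s)e^{-\mu_v s-\mu u}G(I(t-s-u))\,ds\,du,\\ \frac{dI}{dt}&= \beta\int_{t_0}^{h_2} f_{T_2}(u)S(t-u)\int_{t_0}^{h_1} f_{T_1}(s)e^{-\mu_v s-\mu u}G(I(t-s-u))\,ds\,du-(\mu+d+\alpha)I(t),\\ \frac{dR}{dt}&= \alpha I(t)-\mu R(t)-\alpha\int_{t_0}^{\infty} f_{T_3}(r)I(t-r)e^{-\mu r}\,dr, \end{aligned} \] with initial data $\varphi_k\in UC_g$, $\varphi_k(t_0)>0$, and let $(S,E,I,R)$ be a positive solution lying in $D^{expl}(\infty)=\{Y\in\mathbb{R}^4_+:\ \frac{B}{\mu+d}\le S+E+I+R\le\frac{B}{\mu}\}$. Let $R_0^*=\frac{\beta}{\mu+d+\alpha}$ and $E(e^{-(\mu_vT_1+\mu T_2)})=\int_{t_0}^{h_2}\int_{t_0}^{h_1}e^{-\mu_v s-\mu u}f_{T_2}(u)f_{T_1}(s)\,ds\,du$. Suppose one of the following holds: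 1. $R_0^*\ge1$ and $E(e^{-(\mu_vT_1+\mu T_2)})<\frac{1}{R_0^*}$; or 2. $R_0^*<1$. Then there is a positive constant $\lambda>0$ such that \[ \limsup_{t\to\infty}\frac{1}{t}\log I(t)<-\lambda , \] i.e. $I(t)$ converges to zero exponentially.
   Context: Constants: $t_0\ge0$, $h_1,h_2>0$, $B,\beta,\mu,\mu_v,\alpha>0$, $d\ge0$, with $B/\mu=1$. $T_1,T_2,T_3$ are random delays with probability densities $f_{T_1}$ on $[t_0,h_1]$, $f_{T_2}$ on $[t_0,h_2]$, $f_{T_3}$ on $[t_0,\infty)$. $G:[0,\infty)\to[0,\infty)$ satisfies: (A1) $G(0)=0$; (A2) strictly monotonic; (A3) $G\in C^2$, $G''<0$; (A4) $\lim_{I\to\infty}G(I)=C\in[0,\infty)$; (A5) $G(I)\le I$ for $I>0$; (A6) $\left(\frac{G(x)}{x}-\frac{G(y)}{y}\right)(G(x)-G(y))\le0$ for $x,y\ge0$. $UC_g$ is the space of continuous $\varphi:(-\infty,t_0]\to\mathbb{R}_+$ with $\sup_{t\le t_0}|\varphi(t)|/g(t)<\infty$ and $|\varphi|/g$ uniformly continuous, for a continuous non-increasing $g\ge1$ with $g(t_0)=1$, $\lim_{u\to t_0^-}g(t+u)/g(t)=1$ uniformly in $t\ge t_0$, $\lim_{t\to-\infty}g(t)=\infty$. *)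

theory Defs
  imports "HOL-Analysis.Analysis"
begin

definition density_on :: "real set \<Rightarrow> (real \<Rightarrow> real) \<Rightarrow> bool" where
  "density_on A f \<longleftrightarrow> f \<in> borel_measurable lborel \<and> (\<forall>x\<in>A. 0 \<le> f x)
     \<and> set_integrable lborel A f \<and> (LINT x:A|lborel. f x) = 1"

definition admissible_weight :: "real \<Rightarrow> (real \<Rightarrow> real) \<Rightarrow> bool" where
  "admissible_weight t0 g \<longleftrightarrow>
     continuous_on {..t0} g \<and> antimono_on {..t0} g \<and> (\<forall>t\<le>t0. 1 \<le> g t) \<and> g t0 = 1
     \<and> (\<forall>e>0. \<exists>\<delta>>0. \<forall>u. -\<delta> < u \<and> u \<le> 0 \<longrightarrow> (\<forall>t\<le>t0. \<bar>g (t + u) / g t - 1\<bar> < e))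
     \<and> (g \<longlongrightarrow> \<infinity>) at_bot"

definition UC_g :: "real \<Rightarrow> (real \<Rightarrow> real) \<Rightarrow> (real \<Rightarrow> real) set" where
  "UC_g t0 g = {\<phi>. continuous_on {..t0} \<phi> \<and> (\<forall>t\<le>t0. 0 \<le> \<phi> t)
     \<and> bdd_above ((\<lambda>t. \<bar>\<phi> t\<bar> / g t) ` {..t0})
     \<and> uniformly_continuous_on {..t0} (\<lambda>t. \<bar>\<phi> t\<bar> / g t)}"

definition incidence_fun :: "(real \<Rightarrow> real) \<Rightarrow> real \<Rightarrow> bool" where
  "incidence_fun G C \<longleftrightarrow>
     (\<forall>x\<ge>0. 0 \<le> G x)
     \<and> G 0 = 0
     \<and> strict_mono_on {0..} G
     \<and> (\<exists>G' G''. (\<forall>x\<ge>0. (G has_real_derivative G' x) (at x within {0..})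
                        \<and> (G' has_real_derivative G'' x) (at x within {0..})
                        \<and> G'' x < 0)
                 \<and> continuous_on {0..} G'')
     \<and> 0 \<le> C \<and> (G \<longlongrightarrow> C) at_top
     \<and> (\<forall>x>0. G x \<le> x)
     \<and> (\<forall>x>0. \<forall>y>0. (G x / x - G y / y) * (G x - G y) \<le> 0)"

definition R0_star :: "real \<Rightarrow> real \<Rightarrow> real \<Rightarrow> real \<Rightarrow> real" where
  "R0_star \<beta> \<mu> d \<alpha> = \<beta> / (\<mu> + d + \<alpha>)"

definition expect_decay ::
  "real \<Rightarrow> real \<Rightarrow> real \<Rightarrow> real \<Rightarrow> real \<Rightarrow> (real \<Rightarrow> real) \<Rightarrow> (real \<Rightarrow> real) \<Rightarrow> real" where
  "expect_decay t0 h1 h2 \<mu>v \<mu> f1 f2 =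
     (LINT u:{t0..h2}|lborel. (LINT s:{t0..h1}|lborel. exp (- \<mu>v * s - \<mu> * u) * f2 u * f1 s))"

end

theory Submission
  imports Defs
begin

lemma si_mult_bdd:
  fixes f g :: "real \<Rightarrow> real"
  assumes "set_integrable lborel A f" "f \<in> borel_measurable lborel" "A \<in> sets lborel"
    "g \<in> borel_measurable lborel" "\<forall>x\<in>A. \<bar>g x\<bar> \<le> 1"
  shows "set_integrable lborel A (\<lambda>x. f x * g x)"
proof (rule set_integrable_bound[OF assms(1)])
  show "set_borel_measurable lborel A (\<lambda>x. f x * g x)"
    unfolding set_borel_measurable_def using assms by measurable
  show "AE x in lborel. x \<in> A \<longrightarrow> norm (f x * g x) \<le> norm (f x)"
    using assms(5) by (auto simp: abs_mult intro!: mult_left_le)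
qed

lemma si_le:
  fixes f g :: "real \<Rightarrow> real"
  assumes "set_integrable lborel A g" "\<forall>x\<in>A. f x \<le> g x" "\<forall>x\<in>A. 0 \<le> g x"
  shows "(LINT x:A|lborel. f x) \<le> (LINT x:A|lborel. g x)"
proof (cases "set_integrable lborel A f")
  case True thus ?thesis using assms by (intro set_integral_mono) auto
next
  case False
  hence "(LINT x:A|lborel. f x) = 0"
    unfolding set_lebesgue_integral_def set_integrable_def by (simp add: not_integrable_integral_eq)
  moreover have "0 \<le> (LINT x:A|lborel. g x)"
    unfolding set_lebesgue_integral_def using assms(3)
    by (intro integral_nonneg_AE) (auto simp: indicator_def)
  ultimately show ?thesis by simp
qed

theorem theorem4:
  fixes t0 h1 h2 B \<beta> \<mu> \<mu>v \<alpha> d C :: real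
    and f1 f2 f3 G g :: "real \<Rightarrow> real"
    and S E I R :: "real \<Rightarrow> real"
  assumes params: "0 \<le> t0" "0 < h1" "0 < h2" "0 < B" "0 < \<beta>" "0 < \<mu>" "0 < \<mu>v" "0 < \<alpha>" "0 \<le> d"
    and B_mu: "B / \<mu> = 1"
    and delays: "t0 < h1" "t0 < h2"
    and dens1: "density_on {t0..h1} f1"
    and dens2: "density_on {t0..h2} f2"
    and dens3: "density_on {t0..} f3"
    and G: "incidence_fun G C"
    and g: "admissible_weight t0 g"
    and init: "S \<in> UC_g t0 g" "E \<in> UC_g t0 g" "I \<in> UC_g t0 g" "R \<in> UC_g t0 g"
    and init_pos: "S t0 > 0" "E t0 > 0" "I t0 > 0" "R t0 > 0"
    and dS: "\<And>t. t \<ge> t0 \<Longrightarrow> (S has_real_derivative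
        (B - \<beta> * S t * (LINT s:{t0..h1}|lborel. f1 s * exp (- \<mu>v * s) * G (I (t - s)))
           - \<mu> * S t + \<alpha> * (LINT r:{t0..}|lborel. f3 r * I (t - r) * exp (- \<mu> * r)))) (at t within {t0..})"
    and dE: "\<And>t. t \<ge> t0 \<Longrightarrow> (E has_real_derivative
        (\<beta> * S t * (LINT s:{t0..h1}|lborel. f1 s * exp (- \<mu>v * s) * G (I (t - s)))
           - \<mu> * E t
           - \<beta> * (LINT u:{t0..h2}|lborel. f2 u * S (t - u) *
                (LINT s:{t0..h1}|lborel. f1 s * exp (- \<mu>v * s - \<mu> * u) * G (I (t - s - u)))))) (at t within {t0..})"
    and dI: "\<And>t. t \<ge> t0 \<Longrightarrow> (I has_real_derivative
        (\<beta> * (LINT u:{t0..h2}|lborel. f2 u * S (t - u) *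
                (LINT s:{t0..h1}|lborel. f1 s * exp (- \<mu>v * s - \<mu> * u) * G (I (t - s - u))))
           - (\<mu> + d + \<alpha>) * I t)) (at t within {t0..})"
    and dR: "\<And>t. t \<ge> t0 \<Longrightarrow> (R has_real_derivative
        (\<alpha> * I t - \<mu> * R t - \<alpha> * (LINT r:{t0..}|lborel. f3 r * I (t - r) * exp (- \<mu> * r)))) (at t within {t0..})"
    and pos: "\<And>t. t \<ge> t0 \<Longrightarrow> S t > 0 \<and> E t > 0 \<and> I t > 0 \<and> R t > 0"
    and region: "\<And>t. t \<ge> t0 \<Longrightarrow> B / (\<mu> + d) \<le> S t + E t + I t + R t \<and> S t + E t + I t + R t \<le> B / \<mu>"
    and cond: "(R0_star \<beta> \<mu> d \<alpha> \<ge> 1 \<and> expect_decay t0 h1 h2 \<mu>v \<mu> f1 f2 < 1 / R0_star \<beta> \<mu> d \<alpha>)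
               \<or> R0_star \<beta> \<mu> d \<alpha> < 1"
  shows "\<exists>lam>0. Limsup at_top (\<lambda>t. ereal (ln (I t) / t)) < ereal (- lam)"

proof -
  define c where "c = \<mu> + d + \<alpha>"
  have c_pos: "c > 0" using params unfolding c_def by simp
  define \<tau> where "\<tau> = h1 + h2"
  define T where "T = t0 + \<tau>"
  have tau_pos: "\<tau> > 0" using params unfolding \<tau>_def by simp
  have f1m: "f1 \<in> borel_measurable lborel" and f1i: "set_integrable lborel {t0..h1} f1"
    and f1nn: "\<forall>x\<in>{t0..h1}. 0 \<le> f1 x" and f1int: "(LINT x:{t0..h1}|lborel. f1 x) = 1"
    using dens1 unfolding density_on_def by auto
  have f2m: "f2 \<in> borel_measurable lborel" and f2i: "set_integrable lborel {t0..h2} f2"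
    and f2nn: "\<forall>x\<in>{t0..h2}. 0 \<le> f2 x" and f2int: "(LINT x:{t0..h2}|lborel. f2 x) = 1"
    using dens2 unfolding density_on_def by auto
  define Q where "Q = (LINT s:{t0..h1}|lborel. f1 s * exp (- \<mu>v * s))"
  define F2 where "F2 = (LINT u:{t0..h2}|lborel. f2 u * exp (- \<mu> * u))"
  have Q1i: "set_integrable lborel {t0..h1} (\<lambda>s. f1 s * exp (- \<mu>v * s))"
    by (rule si_mult_bdd[OF f1i f1m]) (use params in auto)
  have F2i: "set_integrable lborel {t0..h2} (\<lambda>u. f2 u * exp (- \<mu> * u))"
    by (rule si_mult_bdd[OF f2i f2m]) (use params in auto)
  have Q_nn: "0 \<le> Q"
  proof -
    have "(LINT s:{t0..h1}|lborel. (0::real)) \<le> Q"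
      unfolding Q_def by (rule si_le[OF Q1i]) (use params f1nn in auto)
    thus ?thesis by simp
  qed
  have Q_le: "Q \<le> 1"
  proof -
    have "Q \<le> (LINT s:{t0..h1}|lborel. f1 s)"
      unfolding Q_def
    proof (rule si_le[OF f1i])
      show "\<forall>x\<in>{t0..h1}. f1 x * exp (- \<mu>v * x) \<le> f1 x"
      proof
        fix x assume x: "x \<in> {t0..h1}"
        have "exp (- \<mu>v * x) \<le> 1" using x params by auto
        thus "f1 x * exp (- \<mu>v * x) \<le> f1 x" using f1nn x
          by (metis mult.right_neutral mult_left_mono)
      qed
    qed (use f1nn in auto)
    thus ?thesis using f1int by simp
  qed
  have F2_nn: "0 \<le> F2"
  proof -
    have "(LINT s:{t0..h2}|lborel. (0::real)) \<le> F2"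
      unfolding F2_def by (rule si_le[OF F2i]) (use params f2nn in auto)
    thus ?thesis by simp
  qed
  have F2_le: "F2 \<le> 1"
  proof -
    have "F2 \<le> (LINT s:{t0..h2}|lborel. f2 s)"
      unfolding F2_def
    proof (rule si_le[OF f2i])
      show "\<forall>x\<in>{t0..h2}. f2 x * exp (- \<mu> * x) \<le> f2 x"
      proof
        fix x assume x: "x \<in> {t0..h2}"
        have "exp (- \<mu> * x) \<le> 1" using x params by auto
        thus "f2 x * exp (- \<mu> * x) \<le> f2 x" using f2nn x
          by (metis mult.right_neutral mult_left_mono)
      qed
    qed (use f2nn in auto)
    thus ?thesis using f2int by simp
  qed
  define K where "K = F2 * Q"
  have K_eq: "expect_decay t0 h1 h2 \<mu>v \<mu> f1 f2 = K"
  proof -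
    have inner: "(LINT s:{t0..h1}|lborel. exp (- \<mu>v * s - \<mu> * u) * f2 u * f1 s)
        = (f2 u * exp (- \<mu> * u)) * Q" for u
    proof -
      have "(\<lambda>s. exp (- \<mu>v * s - \<mu> * u) * f2 u * f1 s)
          = (\<lambda>s. (f2 u * exp (- \<mu> * u)) * (f1 s * exp (- \<mu>v * s)))"
        by (rule ext) (simp add: exp_diff exp_minus field_simps)
      thus ?thesis unfolding Q_def by simp
    qed
    show ?thesis unfolding expect_decay_def inner K_def F2_def
      by (simp add: set_integral_mult_left)
  qed
  have aK: "\<beta> * K < c"
    using cond
  proof
    assume h: "R0_star \<beta> \<mu> d \<alpha> \<ge> 1 \<and> expect_decay t0 h1 h2 \<mu>v \<mu> f1 f2 < 1 / R0_star \<beta> \<mu> d \<alpha>"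
    hence "K < c / \<beta>" using K_eq unfolding R0_star_def c_def by simp
    thus ?thesis using params by (simp add: field_simps)
  next
    assume "R0_star \<beta> \<mu> d \<alpha> < 1"
    hence "\<beta> < c" using c_pos unfolding R0_star_def c_def by (simp add: field_simps)
    moreover have "K \<le> 1" unfolding K_def using Q_le Q_nn F2_le F2_nn
      by (metis mult_le_one)
    ultimately show ?thesis using params
      by (smt (verit) mult_left_le)
  qed
  have Gle: "G x \<le> x" if "x \<ge> 0" for x
    using G that unfolding incidence_fun_def by (cases "x = 0") auto
  have S_le: "S t \<le> 1" "S t > 0" if "t \<ge> t0" for t
    using pos[OF that] region[OF that] B_mu by auto
  have Icont: "continuous_on {t0..} I"
    using dI by (auto simp: continuous_on_eq_continuous_within intro: DERIV_continuous)
  have bound: "(LINT u:{t0..h2}|lborel. f2 u * S (t - u) *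
                (LINT s:{t0..h1}|lborel. f1 s * exp (- \<mu>v * s - \<mu> * u) * G (I (t - s - u))))
      \<le> K * P"
    if tT: "t \<ge> T" and IP: "\<And>x. t - \<tau> \<le> x \<Longrightarrow> x \<le> t \<Longrightarrow> I x \<le> P" and P0: "0 \<le> P" for t P
  proof -
    have inner: "(LINT s:{t0..h1}|lborel. f1 s * exp (- \<mu>v * s - \<mu> * u) * G (I (t - s - u)))
        \<le> exp (- \<mu> * u) * P * Q" if u: "u \<in> {t0..h2}" for u
    proof -
      have "(LINT s:{t0..h1}|lborel. f1 s * exp (- \<mu>v * s - \<mu> * u) * G (I (t - s - u)))
          \<le> (LINT s:{t0..h1}|lborel. (exp (- \<mu> * u) * P) * (f1 s * exp (- \<mu>v * s)))"
      proof (rule si_le)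
        show "set_integrable lborel {t0..h1} (\<lambda>s. (exp (- \<mu> * u) * P) * (f1 s * exp (- \<mu>v * s)))"
          using Q1i by auto
        show "\<forall>s\<in>{t0..h1}. 0 \<le> (exp (- \<mu> * u) * P) * (f1 s * exp (- \<mu>v * s))"
          using f1nn P0 by auto
        show "\<forall>s\<in>{t0..h1}. f1 s * exp (- \<mu>v * s - \<mu> * u) * G (I (t - s - u))
             \<le> (exp (- \<mu> * u) * P) * (f1 s * exp (- \<mu>v * s))"
        proof
          fix s assume s: "s \<in> {t0..h1}"
          have x1: "t - \<tau> \<le> t - s - u" "t - s - u \<le> t" using s u params unfolding \<tau>_def by auto
          have "t - s - u \<ge> t0" using x1 tT unfolding T_def by simp
          hence "I (t - s - u) > 0" using pos by blast
          hence "G (I (t - s - u)) \<le> P" using Gle IP[OF x1] by (meson less_imp_le order_trans)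
          moreover have "0 \<le> f1 s * exp (- \<mu>v * s - \<mu> * u)" using f1nn s by auto
          ultimately have "f1 s * exp (- \<mu>v * s - \<mu> * u) * G (I (t - s - u))
              \<le> f1 s * exp (- \<mu>v * s - \<mu> * u) * P" by (rule mult_left_mono)
          also have "\<dots> = (exp (- \<mu> * u) * P) * (f1 s * exp (- \<mu>v * s))"
            by (simp add: exp_diff exp_minus field_simps)
          finally show "f1 s * exp (- \<mu>v * s - \<mu> * u) * G (I (t - s - u))
             \<le> (exp (- \<mu> * u) * P) * (f1 s * exp (- \<mu>v * s))" .
        qed
      qed
      also have "\<dots> = exp (- \<mu> * u) * P * Q" unfolding Q_def by simp
      finally show ?thesis .
    qed
    have "(LINT u:{t0..h2}|lborel. f2 u * S (t - u) *
                (LINT s:{t0..h1}|lborel. f1 s * exp (- \<mu>v * s - \<mu> * u) * G (I (t - s - u))))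
        \<le> (LINT u:{t0..h2}|lborel. (f2 u * exp (- \<mu> * u)) * (P * Q))"
    proof (rule si_le)
      show "set_integrable lborel {t0..h2} (\<lambda>u. (f2 u * exp (- \<mu> * u)) * (P * Q))"
        using F2i by auto
      show "\<forall>u\<in>{t0..h2}. 0 \<le> (f2 u * exp (- \<mu> * u)) * (P * Q)"
        using f2nn P0 Q_nn by auto
      show "\<forall>u\<in>{t0..h2}. f2 u * S (t - u) *
                (LINT s:{t0..h1}|lborel. f1 s * exp (- \<mu>v * s - \<mu> * u) * G (I (t - s - u)))
            \<le> (f2 u * exp (- \<mu> * u)) * (P * Q)"
      proof
        fix u assume u: "u \<in> {t0..h2}"
        define J where "J = (LINT s:{t0..h1}|lborel. f1 s * exp (- \<mu>v * s - \<mu> * u) * G (I (t - s - u)))"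
        have Jle: "J \<le> exp (- \<mu> * u) * P * Q" using inner[OF u] unfolding J_def .
        have "t - u \<ge> t0" using u tT params unfolding T_def \<tau>_def by auto
        hence S1: "S (t - u) \<le> 1" "S (t - u) > 0" using S_le by auto
        have "S (t - u) * J \<le> exp (- \<mu> * u) * P * Q"
        proof (cases "J \<le> 0")
          case True
          hence "S (t - u) * J \<le> 0" using S1 by (simp add: mult_nonneg_nonpos)
          also have "0 \<le> exp (- \<mu> * u) * P * Q" using P0 Q_nn by auto
          finally show ?thesis .
        next
          case False
          hence "S (t - u) * J \<le> J" using S1 by (simp add: mult_le_cancel_right1)
          thus ?thesis using Jle by linarith
        qed
        hence "f2 u * (S (t - u) * J) \<le> f2 u * (exp (- \<mu> * u) * P * Q)"
          using f2nn u by (intro mult_left_mono) auto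
        thus "f2 u * S (t - u) * J \<le> (f2 u * exp (- \<mu> * u)) * (P * Q)"
          by (simp add: algebra_simps)
      qed
    qed
    also have "\<dots> = K * P" unfolding K_def F2_def by (simp add: set_integral_mult_left)
    finally show ?thesis .
  qed
  obtain \<gamma> where gam: "\<gamma> > 0" "\<beta> * K * exp (\<gamma> * \<tau>) + \<gamma> < c"
  proof -
    have "((\<lambda>y. \<beta> * K * exp (y * \<tau>) + y) \<longlongrightarrow> \<beta> * K * exp (0 * \<tau>) + 0) (at_right 0)"
      by (intro tendsto_intros)
    hence "eventually (\<lambda>y. \<beta> * K * exp (y * \<tau>) + y < c) (at_right 0)"
      using aK by (intro order_tendstoD(2)) auto
    then obtain b where b: "b > 0" "\<And>y. y > 0 \<Longrightarrow> y < b \<Longrightarrow> \<beta> * K * exp (y * \<tau>) + y < c"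
      unfolding eventually_at_right_field by auto
    show ?thesis
    proof (rule that[of "b/2"])
      show "\<beta> * K * exp (b / 2 * \<tau>) + b / 2 < c" using b(2)[of "b/2"] b(1) by simp
    qed (use b in simp)
  qed
  have IcontT: "continuous_on {t0..T} I"
    using Icont by (rule continuous_on_subset) auto
  have "t0 \<le> T" unfolding T_def using tau_pos by simp
  then obtain xm where xm: "xm \<in> {t0..T}" "\<And>y. y \<in> {t0..T} \<Longrightarrow> I y \<le> I xm"
    using continuous_attains_sup[OF compact_Icc _ IcontT] by fastforce
  define M where "M = I xm + 1"
  have M_pos: "M > 0" using pos[of xm] xm unfolding M_def by auto
  have IM: "I y < M" if "y \<in> {t0..T}" for y using xm(2)[OF that] unfolding M_def by simp
  define W where "W x = M * exp (- \<gamma> * (x - T))" for x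
  have W_pos: "W x > 0" for x using M_pos unfolding W_def by simp
  have W_mono: "W y \<le> W x" if "x \<le> y" for x y
    using that gam M_pos unfolding W_def by (auto intro!: mult_left_mono)
  have W_ge_M: "M \<le> W x" if "x \<le> T" for x
  proof -
    have "W T = M" unfolding W_def by simp
    thus ?thesis using W_mono[OF that] by simp
  qed
  have W_shift: "W (x - \<tau>) = W x * exp (\<gamma> * \<tau>)" for x
    unfolding W_def by (simp add: algebra_simps flip: exp_add)
  have Wcont: "continuous_on UNIV W" unfolding W_def by (intro continuous_intros)
  have W_deriv: "(W has_real_derivative (- \<gamma> * W x)) (at x)" for x
    unfolding W_def by (auto intro!: derivative_eq_intros)
  have main: "I t < W t" if "t \<ge> T" for t
  proof (rule ccontr)
    assume "\<not> I t < W t"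
    hence t1: "W t \<le> I t" by simp
    define J where "J x = I (max x T)" for x
    have Jcont: "continuous_on UNIV J"
      unfolding J_def
    proof (rule continuous_on_compose2[OF Icont])
      show "continuous_on UNIV (\<lambda>x. max x T)" by (intro continuous_intros)
      show "(\<lambda>x. max x T) ` UNIV \<subseteq> {t0..}" using \<open>t0 \<le> T\<close> by auto
    qed
    define A where "A = {x. T \<le> x} \<inter> {x. W x \<le> J x}"
    have clA: "closed A" unfolding A_def
      by (intro closed_Int closed_Collect_le Jcont Wcont continuous_intros)
    have tA: "t \<in> A" unfolding A_def J_def using that t1 by (simp add: max_def)
    have bA: "bdd_below A" unfolding A_def by (auto intro: bdd_belowI)
    define ts where "ts = Inf A"
    have tsA: "ts \<in> A" unfolding ts_def using closed_contains_Inf[OF _ bA clA] tA by auto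
    hence tsT: "T \<le> ts" and Wts: "W ts \<le> I ts" unfolding A_def J_def by (auto simp: max_def split: if_splits)
    have before: "I x < W x" if "T \<le> x" "x < ts" for x
    proof (rule ccontr)
      assume "\<not> I x < W x"
      hence "x \<in> A" unfolding A_def J_def using that by (auto simp: max_def)
      hence "ts \<le> x" unfolding ts_def using bA by (intro cInf_lower)
      thus False using that by simp
    qed
    have "I T < W T" using IM[of T] W_ge_M[of T] \<open>t0 \<le> T\<close> by simp
    hence tsT': "T < ts" using tsT Wts by (cases "T = ts") auto
    have Its: "I ts \<le> W ts"
    proof -
      have cl: "closed {x. J x \<le> W x}" by (intro closed_Collect_le Jcont Wcont)
      have "{T..<ts} \<subseteq> {x. J x \<le> W x}"
        using before unfolding J_def by (auto simp: max_def less_imp_le)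
      hence "closure {T..<ts} \<subseteq> {x. J x \<le> W x}" using cl by (rule closure_minimal)
      moreover have "ts \<in> closure {T..<ts}" using tsT' by simp
      ultimately have "ts \<in> {x. J x \<le> W x}" by blast
      thus ?thesis unfolding J_def using tsT by (simp add: max_def)
    qed
    have win: "I x \<le> W ts * exp (\<gamma> * \<tau>)" if xw: "ts - \<tau> \<le> x" "x \<le> ts" for x
    proof -
      have Wx: "W x \<le> W ts * exp (\<gamma> * \<tau>)" using W_mono[OF that(1)] W_shift by simp
      consider "x = ts" | "T \<le> x" "x < ts" | "x < T" using xw by fastforce
      thus ?thesis
      proof cases
        case 1 thus ?thesis using Its Wx by simp
      next
        case 2 thus ?thesis using before[OF 2] Wx by simp
      next
        case 3
        have "x \<in> {t0..T}" using 3 xw tsT' unfolding T_def by auto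
        hence "I x < M" by (rule IM)
        also have "M \<le> W (ts - \<tau>)" using W_ge_M[of "ts - \<tau>"] 3 xw by simp
        finally show ?thesis using W_shift by simp
      qed
    qed
    define P where "P = W ts * exp (\<gamma> * \<tau>)"
    have P0: "0 \<le> P" using W_pos[of ts] unfolding P_def by simp
    define L where "L = (LINT u:{t0..h2}|lborel. f2 u * S (ts - u) *
                (LINT s:{t0..h1}|lborel. f1 s * exp (- \<mu>v * s - \<mu> * u) * G (I (ts - s - u))))"
    have L: "L \<le> K * P" unfolding L_def P_def
      by (rule bound[OF tsT win]) (use P0 P_def in auto)
    have Its_eq: "I ts = W ts" using Its Wts by simp
    define D where "D = \<beta> * L - (\<mu> + d + \<alpha>) * I ts"
    have ts0: "t0 < ts" using tsT' tau_pos unfolding T_def by simp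
    have dIts: "(I has_real_derivative D) (at ts within {t0..})"
      unfolding D_def L_def using dI[of ts] ts0 by simp
    have "(I has_real_derivative D) (at ts within {t0<..})"
      by (rule has_field_derivative_subset[OF dIts]) auto
    hence dI2: "(I has_real_derivative D) (at ts)"
      using at_within_open[of ts "{t0<..}"] ts0 by simp
    have "\<beta> * L \<le> \<beta> * (K * P)" using L params by simp
    also have "\<dots> = (\<beta> * K * exp (\<gamma> * \<tau>)) * W ts" unfolding P_def by simp
    finally have bl: "\<beta> * L \<le> (\<beta> * K * exp (\<gamma> * \<tau>)) * W ts" .
    have "(\<beta> * K * exp (\<gamma> * \<tau>)) * W ts < (c - \<gamma>) * W ts"
      using gam(2) W_pos[of ts] by (intro mult_strict_right_mono) auto
    hence Dlt: "D < - \<gamma> * W ts" using bl Its_eq unfolding D_def c_def by (simp add: algebra_simps)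
    have "((\<lambda>x. I x - W x) has_real_derivative (D - (- \<gamma> * W ts))) (at ts)"
      by (intro DERIV_diff dI2 W_deriv)
    moreover have "D - (- \<gamma> * W ts) < 0" using Dlt by simp
    ultimately obtain dd where dd: "dd > 0" "\<And>h. h > 0 \<Longrightarrow> h < dd \<Longrightarrow> I ts - W ts < I (ts - h) - W (ts - h)"
      using DERIV_neg_dec_left by blast
    define h where "h = min (dd/2) ((ts - T)/2)"
    have h: "h > 0" "h < dd" using dd tsT' unfolding h_def by auto
    have "h \<le> (ts - T) / 2" unfolding h_def by (rule min.cobounded2)
    hence "I (ts - h) < W (ts - h)" using h tsT' by (intro before) auto
    thus False using dd(2)[OF h] Its_eq by simp
  qed
  define lam where "lam = \<gamma> / 4"
  have ev: "eventually (\<lambda>t. ereal (ln (I t) / t) \<le> ereal (- \<gamma> / 2)) at_top"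
  proof -
    define N where "N = max (max T 1) (2 * \<bar>ln M + \<gamma> * T\<bar> / \<gamma>)"
    have "ereal (ln (I t) / t) \<le> ereal (- \<gamma> / 2)" if tN: "t \<ge> N" for t
    proof -
      have tT: "t \<ge> T" and t1: "t \<ge> 1" and t2: "t \<ge> 2 * \<bar>ln M + \<gamma> * T\<bar> / \<gamma>"
        using tN unfolding N_def by auto
      have It: "I t > 0" using pos[of t] tT tau_pos unfolding T_def by simp
      have "ln (I t) < ln (W t)" using main[OF tT] It W_pos[of t] by simp
      also have "ln (W t) = ln M - \<gamma> * (t - T)" unfolding W_def using M_pos by (simp add: ln_mult)
      finally have l1: "ln (I t) < ln M - \<gamma> * (t - T)" .
      have "2 * \<bar>ln M + \<gamma> * T\<bar> \<le> \<gamma> * t" using t2 gam(1) by (simp add: field_simps)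
      hence "ln (I t) \<le> - \<gamma> / 2 * t" using l1 by (simp add: algebra_simps abs_if split: if_splits)
      hence "ln (I t) / t \<le> - \<gamma> / 2" using t1 by (simp add: divide_le_eq)
      thus ?thesis by simp
    qed
    thus ?thesis unfolding eventually_at_top_linorder by blast
  qed
  have "Limsup at_top (\<lambda>t. ereal (ln (I t) / t)) \<le> ereal (- \<gamma> / 2)" by (rule Limsup_bounded[OF ev])
  also have "\<dots> < ereal (- lam)" using gam by (simp add: lam_def)
  finally show ?thesis using gam lam_def by (intro exI[of _ lam]) auto
qed

end
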